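(* Let $ABC$ be a triangle with incenter $I$ and orthocenter $H$, and let $H_A, H_B, H_C$ be the orthocenters of the triangles $BIC$, $CIA$, $AIB$ respectively. Let $O_a, O_b, O_c$ be the circumcenters of the triangles $H_ABC$, $H_BCA$, $H_CBA$ respectively (the triangle $O_aO_bO_c$ is the Fuhrmann triangle), and let $O_A, O_B, O_C$ be the circumcenters of the triangles $AH_BH_C$, $BH_CH_A$, $CH_AH_B$ respectively (the triangle $O_AO_BO_C$ is called the Anti-Fuhrmann triangle). Then the triangle $O_AO_BO_C$ is the image of the triangle $O_aO_bO_c$ under the point reflection in the midpoint of $HI$, with $O_a \mapsto O_A$, $O_b\mapsto O_B$, $O_c\mapsto O_C$. *)

theory Defs
  imports "HOL-Analysis.Analysis"
begin

text \<open>Points of the Euclidean plane are modelled as complex numbers.\<close>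

definition orthocenter :: "complex \<Rightarrow> complex \<Rightarrow> complex \<Rightarrow> complex" where
  "orthocenter A B C = (THE H. inner (H - A) (B - C) = 0 \<and> inner (H - B) (C - A) = 0
                              \<and> inner (H - C) (A - B) = 0)"

definition circumcenter :: "complex \<Rightarrow> complex \<Rightarrow> complex \<Rightarrow> complex" where
  "circumcenter A B C = (THE P. dist P A = dist P B \<and> dist P B = dist P C)"

text \<open>Incenter via its barycentric coordinates (a : b : c), a, b, c the side lengths.\<close>
definition incenter :: "complex \<Rightarrow> complex \<Rightarrow> complex \<Rightarrow> complex" where
  "incenter A B C = (dist B C *\<^sub>R A + dist C A *\<^sub>R B + dist A B *\<^sub>R C)
                      /\<^sub>R (dist B C + dist C A + dist A B)"

definition point_reflection :: "complex \<Rightarrow> complex \<Rightarrow> complex" where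
  "point_reflection M X = 2 *\<^sub>R M - X"

end

theory Submission
  imports Defs
begin


definition area :: "complex \<Rightarrow> complex \<Rightarrow> complex \<Rightarrow> real" where
  "area p q s = Im (cnj (q - p) * (s - p))"

lemma inner_cnj: "inner u v = Re (u * cnj v)"
  by (simp add: inner_complex_def)

lemma lin_unique:
  assumes "Re (d * cnj u) = 0" "Re (d * cnj v) = 0" "Im (cnj u * v) \<noteq> 0"
  shows "d = 0"
proof -
  have e1: "Re d * Re u + Im d * Im u = 0" using assms(1) by simp
  have e2: "Re d * Re v + Im d * Im v = 0" using assms(2) by simp
  have k: "Re u * Im v - Im u * Re v \<noteq> 0" using assms(3) by (simp add: algebra_simps)
  have "Re d * (Re u * Im v - Im u * Re v) = Im v * (Re d * Re u + Im d * Im u) - Im u * (Re d * Re v + Im d * Im v)"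
    by (simp add: algebra_simps)
  then have "Re d * (Re u * Im v - Im u * Re v) = 0" using e1 e2 by simp
  then have r: "Re d = 0" using k by simp
  have "Im d * (Re u * Im v - Im u * Re v) = Re u * (Re d * Re v + Im d * Im v) - Re v * (Re d * Re u + Im d * Im u)"
    by (simp add: algebra_simps)
  then have "Im d * (Re u * Im v - Im u * Re v) = 0" using e1 e2 by simp
  then have i: "Im d = 0" using k by simp
  show ?thesis using r i by (simp add: complex_eq_iff)
qed

lemma area_cyc: "area p q s = area q s p"
  by (simp add: area_def algebra_simps)
lemma area_swap: "area p q s = - area q p s"
  by (simp add: area_def algebra_simps)

lemma orth_unique:
  assumes a: "area p q s \<noteq> 0"
    and h: "inner (h - p) (q - s) = 0" "inner (h - q) (s - p) = 0" "inner (h - s) (p - q) = 0"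
  shows "orthocenter p q s = h"
  unfolding orthocenter_def
proof (rule the_equality)
  show "inner (h - p) (q - s) = 0 \<and> inner (h - q) (s - p) = 0 \<and> inner (h - s) (p - q) = 0"
    using h by simp
next
  fix h' assume h': "inner (h' - p) (q - s) = 0 \<and> inner (h' - q) (s - p) = 0 \<and> inner (h' - s) (p - q) = 0"
  have "inner (h' - h) (q - s) = inner (h' - p) (q - s) - inner (h - p) (q - s)"
    by (simp add: inner_diff_left)
  then have 1: "Re ((h' - h) * cnj (q - s)) = 0"
    using h h' by (simp add: inner_cnj)
  have "inner (h' - h) (s - p) = inner (h' - q) (s - p) - inner (h - q) (s - p)"
    by (simp add: inner_diff_left)
  then have 2: "Re ((h' - h) * cnj (s - p)) = 0"
    using h h' by (simp add: inner_cnj)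
  have 3: "Im (cnj (q - s) * (s - p)) \<noteq> 0"
    using a by (simp add: area_def algebra_simps)
  show "h' = h" using lin_unique[OF 1 2 3] by simp
qed

lemma dist_eq_iff: "dist h p = dist h q \<longleftrightarrow> 2 * inner h (q - p) = (cmod q)^2 - (cmod p)^2"
proof -
  have "dist h p = dist h q \<longleftrightarrow> (dist h p)^2 = (dist h q)^2"
    by (simp add: power2_eq_iff_nonneg)
  also have "\<dots> \<longleftrightarrow> 2 * inner h (q - p) = (cmod q)^2 - (cmod p)^2"
    unfolding dist_norm cmod_power2 inner_complex_def
    by (simp add: power2_eq_square algebra_simps)
  finally show ?thesis .
qed

lemma circ_unique:
  assumes a: "area p q s \<noteq> 0"
    and h: "dist h p = dist h q" "dist h q = dist h s"
  shows "circumcenter p q s = h"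
  unfolding circumcenter_def
proof (rule the_equality)
  show "dist h p = dist h q \<and> dist h q = dist h s" using h by simp
next
  fix h' assume h': "dist h' p = dist h' q \<and> dist h' q = dist h' s"
  have a1: "2 * inner h (q - p) = (cmod q)^2 - (cmod p)^2" using h(1) dist_eq_iff by blast
  have a2: "2 * inner h (s - q) = (cmod s)^2 - (cmod q)^2" using h(2) dist_eq_iff by blast
  have b1: "2 * inner h' (q - p) = (cmod q)^2 - (cmod p)^2" using h' dist_eq_iff by blast
  have b2: "2 * inner h' (s - q) = (cmod s)^2 - (cmod q)^2" using h' dist_eq_iff by blast
  have "inner (h' - h) (q - p) = 0"
    using a1 b1 by (simp add: inner_diff_left)
  then have 1: "Re ((h' - h) * cnj (q - p)) = 0" by (simp add: inner_cnj)
  have "inner (h' - h) (s - q) = 0"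
    using a2 b2 by (simp add: inner_diff_left)
  then have 2: "Re ((h' - h) * cnj (s - q)) = 0" by (simp add: inner_cnj)
  have 3: "Im (cnj (q - p) * (s - q)) \<noteq> 0"
    using a by (simp add: area_def algebra_simps)
  show "h' = h" using lin_unique[OF 1 2 3] by simp
qed


lemma re0: "w + cnj w = 0 \<Longrightarrow> Re w = 0"
  by (simp add: complex_add_cnj)

lemma im_realmul: "cnj T = T \<Longrightarrow> Im (T * u) = Re T * Im u"
proof -
  assume "cnj T = T"
  then have "Im (cnj T) = Im T" by simp
  then have "Im T = 0" by simp
  then show ?thesis by simp
qed

lemma area_scale: fixes r :: real shows
  "area (c0 + of_real r * p) (c0 + of_real r * q) (c0 + of_real r * s) = r^2 * area p q s"
  by (simp add: area_def algebra_simps power2_eq_square)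

lemma orth_tr:
  fixes r :: real
  assumes "r \<noteq> 0" "area p q s \<noteq> 0"
    "Re ((h - p) * cnj (q - s)) = 0" "Re ((h - q) * cnj (s - p)) = 0" "Re ((h - s) * cnj (p - q)) = 0"
  shows "orthocenter (c0 + of_real r * p) (c0 + of_real r * q) (c0 + of_real r * s) = c0 + of_real r * h"
proof (rule orth_unique)
  have e: "\<And>a b c d. inner (c0 + of_real r * a - (c0 + of_real r * b)) (c0 + of_real r * c - (c0 + of_real r * d))
     = r^2 * Re ((a - b) * cnj (c - d))"
    by (simp add: inner_complex_def power2_eq_square algebra_simps)
  show "area (c0 + of_real r * p) (c0 + of_real r * q) (c0 + of_real r * s) \<noteq> 0"
    using assms(1,2) by (simp add: area_scale)
  show "inner (c0 + of_real r * h - (c0 + of_real r * p)) (c0 + of_real r * q - (c0 + of_real r * s)) = 0"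
    unfolding e using assms by simp
  show "inner (c0 + of_real r * h - (c0 + of_real r * q)) (c0 + of_real r * s - (c0 + of_real r * p)) = 0"
    unfolding e using assms by simp
  show "inner (c0 + of_real r * h - (c0 + of_real r * s)) (c0 + of_real r * p - (c0 + of_real r * q)) = 0"
    unfolding e using assms by simp
qed

lemma circ_tr:
  fixes r :: real
  assumes "r \<noteq> 0" "area p q s \<noteq> 0"
    "cmod (h - p) = cmod (h - q)" "cmod (h - q) = cmod (h - s)"
  shows "circumcenter (c0 + of_real r * p) (c0 + of_real r * q) (c0 + of_real r * s) = c0 + of_real r * h"
proof (rule circ_unique)
  have e: "\<And>a b. dist (c0 + of_real r * a) (c0 + of_real r * b) = \<bar>r\<bar> * cmod (a - b)"
    by (simp add: dist_norm norm_mult right_diff_distrib[symmetric])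
  show "area (c0 + of_real r * p) (c0 + of_real r * q) (c0 + of_real r * s) \<noteq> 0"
    using assms(1,2) by (simp add: area_scale)
  show "dist (c0 + of_real r * h) (c0 + of_real r * p) = dist (c0 + of_real r * h) (c0 + of_real r * q)"
    unfolding e using assms by simp
  show "dist (c0 + of_real r * h) (c0 + of_real r * q) = dist (c0 + of_real r * h) (c0 + of_real r * s)"
    unfolding e using assms by simp
qed



lemma unit_cnj: "cmod x = 1 \<Longrightarrow> cnj x = inverse x"
proof -
  assume u: "cmod x = 1"
  then have x0: "x \<noteq> 0" by auto
  have "complex_of_real ((cmod x)^2) = x * cnj x" by (rule complex_norm_square)
  then have "x * cnj x = 1" using u by simp
  then show ?thesis using x0 by (simp add: field_simps)
qed

lemma im_self: "Im (x * cnj x) = 0" by (simp add: algebra_simps)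

lemma cnj_self_real: "cnj w * w = complex_of_real ((cmod w)^2)"
  by (metis complex_norm_square mult.commute)

lemma vertex:
  fixes x y z c0 A B C I HA HB HC :: complex and r :: real
  assumes ux: "cmod x = 1" and uy: "cmod y = 1" and uz: "cmod z = 1" and r: "r \<noteq> 0"
    and sg: "(Im (y*cnj z) > 0 \<and> Im (z*cnj x) > 0 \<and> Im (x*cnj y) > 0) \<or>
             (Im (y*cnj z) < 0 \<and> Im (z*cnj x) < 0 \<and> Im (x*cnj y) < 0)"
    and eA: "A = c0 + of_real r * x^2" and eB: "B = c0 + of_real r * y^2"
    and eC: "C = c0 + of_real r * z^2"
    and eI: "I = c0 + of_real r * (-(x*y+y*z+z*x))"
    and eHA: "HA = c0 + of_real r * (y^2+z^2+y*z-x*y-x*z)"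
    and eHB: "HB = c0 + of_real r * (z^2+x^2+z*x-y*z-y*x)"
    and eHC: "HC = c0 + of_real r * (x^2+y^2+x*y-z*x-z*y)"
  shows "orthocenter B I C = HA \<and> circumcenter HA B C = c0 + of_real r * (y^2+z^2+y*z)
    \<and> circumcenter HA C B = c0 + of_real r * (y^2+z^2+y*z)
    \<and> circumcenter A HB HC = c0 + of_real r * (x^2-x*y-x*z-2*y*z)"
proof -
  have x0: "x \<noteq> 0" using ux by auto
  have y0: "y \<noteq> 0" using uy by auto
  have z0: "z \<noteq> 0" using uz by auto
  have cx: "cnj x = inverse x" using ux by (rule unit_cnj)
  have cy: "cnj y = inverse y" using uy by (rule unit_cnj)
  have cz: "cnj z = inverse z" using uz by (rule unit_cnj)
  have t1: "Im (y*cnj z) \<noteq> 0" and t2: "Im (z*cnj x) \<noteq> 0" and t3: "Im (x*cnj y) \<noteq> 0"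
    using sg by auto
  have tsum: "Im (y*cnj z) + Im (z*cnj x) + Im (x*cnj y) \<noteq> 0" using sg by auto
  have xy: "x + y \<noteq> 0"
  proof
    assume "x + y = 0" then have "y = - x" by (simp add: add_eq_0_iff)
    then show False using t3 by (simp add: algebra_simps)
  qed
  have yz: "y + z \<noteq> 0"
  proof
    assume "y + z = 0" then have "z = - y" by (simp add: add_eq_0_iff)
    then show False using t1 by (simp add: algebra_simps)
  qed
  have zx: "z + x \<noteq> 0"
  proof
    assume "z + x = 0" then have "x = - z" by (simp add: add_eq_0_iff)
    then show False using t2 by (simp add: algebra_simps)
  qed
  have ymz: "y - z \<noteq> 0"
  proof
    assume "y - z = 0" then have "z = y" by simp
    then show False using t1 by (simp add: algebra_simps)
  qed
  define T where "T = (x+y)*(y+z)*(z+x)*cnj x*cnj y*cnj z"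
  have TT: "cnj T = T"
    unfolding T_def
    by (simp add: cx cy cz, (simp add: field_simps x0 y0 z0)?, (algebra)?)
  have T0: "T \<noteq> 0" unfolding T_def using xy yz zx x0 y0 z0 by simp
  have "Im (cnj T) = Im T" using TT by simp
  then have ImT: "Im T = 0" by simp
  have ReT: "Re T \<noteq> 0" using T0 ImT by (simp add: complex_eq_iff)
  define I0 where "I0 = -(x*y+y*z+z*x)"
  define h where "h = y^2+z^2+y*z-x*y-x*z"
  have a: "orthocenter (c0 + of_real r * y^2) (c0 + of_real r * I0) (c0 + of_real r * z^2)
       = c0 + of_real r * h"
  proof (rule orth_tr[OF r])
    have e: "cnj (z^2 - I0) * (y^2 - I0) = T * (1 + y * cnj z)"
      unfolding T_def I0_def
      by (simp add: cx cy cz, (simp add: field_simps x0 y0 z0)?, (algebra)?)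
    have "area (y^2) I0 (z^2) = area I0 (z^2) (y^2)" using area_cyc by metis
    also have "\<dots> = Re T * Im (y * cnj z)"
      unfolding area_def e im_realmul[OF TT] by simp
    finally show "area (y^2) I0 (z^2) \<noteq> 0" using ReT t1 by simp
    show "Re ((h - y\<^sup>2) * cnj (I0 - z\<^sup>2)) = 0"
      apply (rule re0) unfolding h_def I0_def
      by (simp add: cx cy cz, (simp add: field_simps x0 y0 z0)?, (algebra)?)
    show "Re ((h - I0) * cnj (z\<^sup>2 - y\<^sup>2)) = 0"
      apply (rule re0) unfolding h_def I0_def
      by (simp add: cx cy cz, (simp add: field_simps x0 y0 z0)?, (algebra)?)
    show "Re ((h - z\<^sup>2) * cnj (y\<^sup>2 - I0)) = 0"
      apply (rule re0) unfolding h_def I0_def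
      by (simp add: cx cy cz, (simp add: field_simps x0 y0 z0)?, (algebra)?)
  qed
  define oa where "oa = y^2+z^2+y*z"
  have areab: "area h (y^2) (z^2) = (cmod (y+z))^2 * (Im (y*cnj z) + Im (z*cnj x) + Im (x*cnj y))"
  proof -
    have "cnj (y^2 - h) * (z^2 - h) = (cnj (y+z) * (y+z)) * (cnj (x - z) * (x - y))"
      unfolding h_def by (simp add: algebra_simps power2_eq_square)
    then have "area h (y^2) (z^2) = (cmod (y+z))^2 * Im (cnj (x - z) * (x - y))"
      unfolding area_def cnj_self_real by simp
    also have "Im (cnj (x - z) * (x - y)) = Im (y*cnj z) + Im (z*cnj x) + Im (x*cnj y)"
      by (simp add: algebra_simps)
    finally show ?thesis .
  qed
  have nb: "area h (y^2) (z^2) \<noteq> 0" using areab tsum yz by simp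
  have nb': "area h (z^2) (y^2) \<noteq> 0" proof -
    have g: "\<And>p q s. area p s q = - area p q s" by (simp add: area_def algebra_simps)
    have "area h (z^2) (y^2) = - area h (y^2) (z^2)" by (rule g)
    then show ?thesis using nb by simp
  qed
  have db1: "cmod (oa - h) = cmod (y + z)"
  proof -
    have "oa - h = x * (y + z)" unfolding oa_def h_def by (simp add: algebra_simps)
    then show ?thesis using ux by (simp add: norm_mult)
  qed
  have db2: "cmod (oa - y^2) = cmod (y + z)"
  proof -
    have "oa - y^2 = z * (y + z)" unfolding oa_def by (simp add: algebra_simps power2_eq_square)
    then show ?thesis using uz by (simp add: norm_mult)
  qed
  have db3: "cmod (oa - z^2) = cmod (y + z)"
  proof -
    have "oa - z^2 = y * (y + z)" unfolding oa_def by (simp add: algebra_simps power2_eq_square)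
    then show ?thesis using uy by (simp add: norm_mult)
  qed
  have b1: "circumcenter (c0 + of_real r * h) (c0 + of_real r * y^2) (c0 + of_real r * z^2)
       = c0 + of_real r * oa"
    by (rule circ_tr[OF r nb]) (simp_all add: db1 db2 db3)
  have b2: "circumcenter (c0 + of_real r * h) (c0 + of_real r * z^2) (c0 + of_real r * y^2)
       = c0 + of_real r * oa"
    by (rule circ_tr[OF r nb']) (simp_all add: db1 db2 db3)
  define hb where "hb = z^2+x^2+z*x-y*z-y*x"
  define hc where "hc = x^2+y^2+x*y-z*x-z*y"
  define oA where "oA = x^2-x*y-x*z-2*y*z"
  have nc: "area (x^2) hb hc \<noteq> 0"
  proof -
    define u where "u = cnj (x+z) * (x+y)"
    have e1: "cnj (hb - x^2) * (hc - x^2) = - (cnj (y - z) * (y - z)) * u"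
      unfolding hb_def hc_def u_def by (simp add: algebra_simps power2_eq_square)
    have e2: "u * (cnj (y+z) * (y+z)) = T * (1 + y * cnj z)"
      unfolding T_def u_def
      by (simp add: cx cy cz, (simp add: field_simps x0 y0 z0)?, (algebra)?)
    have "Im u * (cmod (y+z))^2 = Re T * Im (y * cnj z)"
    proof -
      have "Im (u * (cnj (y+z) * (y+z))) = Im (T * (1 + y * cnj z))" using e2 by simp
      then show ?thesis unfolding cnj_self_real im_realmul[OF TT] by (simp add: mult.commute)
    qed
    then have u0: "Im u \<noteq> 0" using ReT t1 by auto
    have "area (x^2) hb hc = - (((cmod (y - z))^2) * Im u)"
      unfolding area_def e1 cnj_self_real by simp
    then show ?thesis using u0 ymz by simp
  qed
  have w: "x*y + x*z + 2*y*z = x*y*z*cnj (2*x+y+z)"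
    by (simp add: cx cy cz, (simp add: field_simps x0 y0 z0)?, (algebra)?)
  have dc1: "cmod (oA - x^2) = cmod (2*x+y+z)"
  proof -
    have "oA - x^2 = - (x*y*z*cnj (2*x+y+z))" unfolding oA_def w[symmetric] by (simp add: algebra_simps)
    then have "cmod (oA - x^2) = cmod x * cmod y * cmod z * cmod (cnj (2*x+y+z))"
      by (simp only: norm_minus_cancel norm_mult)
    then show ?thesis by (simp only: complex_mod_cnj ux uy uz mult_1_left)
  qed
  have dc2: "cmod (oA - hb) = cmod (2*x+y+z)"
  proof -
    have "oA - hb = - (z * (2*x+y+z))" unfolding oA_def hb_def by (simp add: algebra_simps power2_eq_square)
    then show ?thesis using uz by (simp add: norm_mult)
  qed
  have dc3: "cmod (oA - hc) = cmod (2*x+y+z)"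
  proof -
    have "oA - hc = - (y * (2*x+y+z))" unfolding oA_def hc_def by (simp add: algebra_simps power2_eq_square)
    then show ?thesis using uy by (simp add: norm_mult)
  qed
  have c: "circumcenter (c0 + of_real r * x^2) (c0 + of_real r * hb) (c0 + of_real r * hc)
       = c0 + of_real r * oA"
    by (rule circ_tr[OF r nc]) (simp_all add: dc1 dc2 dc3)
  show ?thesis
    using a b1 b2 c unfolding eA eB eC eI eHA eHB eHC I0_def h_def oa_def hb_def hc_def oA_def
    by simp
qed



lemma area_collinear: "area p q s = 0 \<Longrightarrow> collinear {p, q, s}"
proof -
  assume a: "area p q s = 0"
  have "Im ((s - q) / (p - q)) = 0"
    using a by (simp add: Im_divide area_def algebra_simps)
  then have "collinear {0, p - q, s - q}"
    by (simp add: collinear_iff_Reals complex_is_Real_iff)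
  then show ?thesis by (subst collinear_3) auto
qed

lemma unit_im:
  assumes ux: "cmod x = 1" and uy: "cmod y = 1" and i: "Im (x * cnj y) = 0"
  shows "x^2 = y^2"
proof -
  define v where "v = x * cnj y"
  have cy: "cnj y = inverse y" using uy by (rule unit_cnj)
  have y0: "y \<noteq> 0" using uy by auto
  have vr: "v = of_real (Re v)" using i unfolding v_def by (simp add: complex_eq_iff)
  have "cmod v = 1" unfolding v_def using ux uy by (simp add: norm_mult)
  then have "\<bar>Re v\<bar> = 1" using vr by (metis norm_of_real)
  then have "(Re v)^2 = 1" by (metis abs_power2 one_power2 power2_abs)
  then have v2: "v^2 = 1" by (subst vr) (metis of_real_1 of_real_power)
  have "x = v * y" unfolding v_def cy using y0 by simp
  then show ?thesis using v2 by (simp add: power_mult_distrib)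
qed

lemma cmod_sqdiff:
  assumes uy: "cmod y = 1" and uz: "cmod z = 1"
  shows "cmod (y^2 - z^2) = 2 * \<bar>Im (y * cnj z)\<bar>"
proof -
  have cy: "cnj y = inverse y" using uy by (rule unit_cnj)
  have cz: "cnj z = inverse z" using uz by (rule unit_cnj)
  have y0: "y \<noteq> 0" using uy by auto
  have z0: "z \<noteq> 0" using uz by auto
  have "y^2 - z^2 = y * z * (y * cnj z - cnj (y * cnj z))"
    by (simp add: cy cz field_simps y0 z0 power2_eq_square)
  also have "\<dots> = y * z * (complex_of_real (2 * Im (y * cnj z)) * \<i>)"
    by (simp only: complex_diff_cnj)
  finally have "cmod (y^2 - z^2) = cmod y * cmod z * cmod (complex_of_real (2 * Im (y * cnj z)) * \<i>)"
    by (simp only: norm_mult)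
  moreover have "cmod (complex_of_real (2 * Im (y * cnj z)) * \<i>) = 2 * \<bar>Im (y * cnj z)\<bar>"
    by (simp only: norm_mult norm_of_real norm_ii mult_1_right abs_mult abs_numeral)
  ultimately show ?thesis using uy uz by (simp only: mult_1_left)
qed

lemma sign_choice:
  fixes x0 y0 z0 :: complex
  assumes "Im (y0*cnj z0) \<noteq> 0" "Im (z0*cnj x0) \<noteq> 0" "Im (x0*cnj y0) \<noteq> 0"
  shows "\<exists>x y z. (x = x0 \<or> x = -x0) \<and> (y = y0 \<or> y = -y0) \<and> (z = z0 \<or> z = -z0) \<and>
     ((Im (y*cnj z) > 0 \<and> Im (z*cnj x) > 0 \<and> Im (x*cnj y) > 0) \<or>
      (Im (y*cnj z) < 0 \<and> Im (z*cnj x) < 0 \<and> Im (x*cnj y) < 0))"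
proof -
  define t1 where "t1 = Im (y0*cnj z0)"
  define t2 where "t2 = Im (z0*cnj x0)"
  define t3 where "t3 = Im (x0*cnj y0)"
  have nz: "t1 \<noteq> 0" "t2 \<noteq> 0" "t3 \<noteq> 0" using assms unfolding t1_def t2_def t3_def by auto
  have n1: "\<And>a b :: complex. Im ((-a) * cnj b) = - Im (a * cnj b)" by simp
  have n2: "\<And>a b :: complex. Im (a * cnj (-b)) = - Im (a * cnj b)" by simp
  consider "(t1 > 0) = (t2 > 0) \<and> (t2 > 0) = (t3 > 0)"
    | "(t2 > 0) = (t3 > 0) \<and> (t1 > 0) \<noteq> (t2 > 0)"
    | "(t1 > 0) = (t3 > 0) \<and> (t2 > 0) \<noteq> (t1 > 0)"
    | "(t1 > 0) = (t2 > 0) \<and> (t3 > 0) \<noteq> (t1 > 0)"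
    by blast
  then show ?thesis
  proof cases
    case 1
    have "(t1 > 0 \<and> t2 > 0 \<and> t3 > 0) \<or> (t1 < 0 \<and> t2 < 0 \<and> t3 < 0)" using 1 nz by auto
    then show ?thesis unfolding t1_def t2_def t3_def by blast
  next
    case 2
    have "(t1 > 0 \<and> -t2 > 0 \<and> -t3 > 0) \<or> (t1 < 0 \<and> -t2 < 0 \<and> -t3 < 0)" using 2 nz by auto
    then have "(Im (y0*cnj z0) > 0 \<and> Im (z0*cnj (-x0)) > 0 \<and> Im ((-x0)*cnj y0) > 0) \<or>
      (Im (y0*cnj z0) < 0 \<and> Im (z0*cnj (-x0)) < 0 \<and> Im ((-x0)*cnj y0) < 0)"
      unfolding n1 n2 t1_def t2_def t3_def .
    then show ?thesis by blast
  next
    case 3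
    have "(-t1 > 0 \<and> t2 > 0 \<and> -t3 > 0) \<or> (-t1 < 0 \<and> t2 < 0 \<and> -t3 < 0)" using 3 nz by auto
    then have "(Im ((-y0)*cnj z0) > 0 \<and> Im (z0*cnj x0) > 0 \<and> Im (x0*cnj (-y0)) > 0) \<or>
      (Im ((-y0)*cnj z0) < 0 \<and> Im (z0*cnj x0) < 0 \<and> Im (x0*cnj (-y0)) < 0)"
      unfolding n1 n2 t1_def t2_def t3_def .
    then show ?thesis by blast
  next
    case 4
    have "(-t1 > 0 \<and> -t2 > 0 \<and> t3 > 0) \<or> (-t1 < 0 \<and> -t2 < 0 \<and> t3 < 0)" using 4 nz by auto
    then have "(Im (y0*cnj (-z0)) > 0 \<and> Im ((-z0)*cnj x0) > 0 \<and> Im (x0*cnj y0) > 0) \<or>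
      (Im (y0*cnj (-z0)) < 0 \<and> Im ((-z0)*cnj x0) < 0 \<and> Im (x0*cnj y0) < 0)"
      unfolding n1 n2 t1_def t2_def t3_def .
    then show ?thesis by blast
  qed
qed

lemma key2:
  fixes x y z :: complex assumes x0: "x \<noteq> 0" and y0: "y \<noteq> 0" and z0: "z \<noteq> 0"
  shows "(y/z - z/y)*x^2 + (z/x - x/z)*y^2 + (x/y - y/x)*z^2 = ((y/z - z/y) + (z/x - x/z) + (x/y - y/x)) * (-(x*y+y*z+z*x))"
  by (simp add: field_simps x0 y0 z0, (algebra)?)

lemma key_abs:
  fixes d u1 u2 u3 X Y Z W :: complex
  assumes h: "u1*X + u2*Y + u3*Z = (u1+u2+u3)*W"
  shows "(d*u1)*X + (d*u2)*Y + (d*u3)*Z = (d*u1+d*u2+d*u3)*W"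
proof -
  have "(d*u1)*X + (d*u2)*Y + (d*u3)*Z = d*(u1*X + u2*Y + u3*Z)" by (simp add: algebra_simps)
  also have "\<dots> = d*((u1+u2+u3)*W)" using h by simp
  also have "\<dots> = (d*u1+d*u2+d*u3)*W" by (simp add: algebra_simps)
  finally show ?thesis .
qed

lemma of_real_Im: "complex_of_real (Im v) = inverse (2 * \<i>) * (v - cnj v)"
  by (simp add: complex_diff_cnj) (simp add: complex_eq_iff)

lemma incenter_param:
  fixes x y z c0 A B C :: complex and r :: real
  assumes ux: "cmod x = 1" and uy: "cmod y = 1" and uz: "cmod z = 1" and r: "r > 0"
    and sg: "(Im (y*cnj z) > 0 \<and> Im (z*cnj x) > 0 \<and> Im (x*cnj y) > 0) \<or>
             (Im (y*cnj z) < 0 \<and> Im (z*cnj x) < 0 \<and> Im (x*cnj y) < 0)"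
    and eA: "A = c0 + of_real r * x^2" and eB: "B = c0 + of_real r * y^2"
    and eC: "C = c0 + of_real r * z^2"
  shows "incenter A B C = c0 + of_real r * (-(x*y+y*z+z*x))"
proof -
  have x0: "x \<noteq> 0" using ux by auto
  have y0: "y \<noteq> 0" using uy by auto
  have z0: "z \<noteq> 0" using uz by auto
  have cx: "cnj x = inverse x" using ux by (rule unit_cnj)
  have cy: "cnj y = inverse y" using uy by (rule unit_cnj)
  have cz: "cnj z = inverse z" using uz by (rule unit_cnj)
  define t1 where "t1 = Im (y*cnj z)"
  define t2 where "t2 = Im (z*cnj x)"
  define t3 where "t3 = Im (x*cnj y)"
  have key: "of_real t1 * x^2 + of_real t2 * y^2 + of_real t3 * z^2
      = (of_real t1 + of_real t2 + of_real t3) * (-(x*y+y*z+z*x))"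
  proof -
    have e: "a * cnj b - cnj (a * cnj b) = a / b - b / a" if "cmod a = 1" "cmod b = 1" for a b :: complex
      using that by (simp add: unit_cnj divide_inverse mult.commute)
    show ?thesis unfolding t1_def t2_def t3_def of_real_Im e[OF uy uz] e[OF uz ux] e[OF ux uy]
      by (rule key_abs, rule key2[OF x0 y0 z0])
  qed
  have dd: "\<And>a b. dist (c0 + of_real r * a) (c0 + of_real r * b) = r * cmod (a - b)"
    using r by (simp add: dist_norm norm_mult right_diff_distrib[symmetric])
  have da: "dist B C = 2 * r * \<bar>t1\<bar>" unfolding eB eC dd cmod_sqdiff[OF uy uz] t1_def by simp
  have db: "dist C A = 2 * r * \<bar>t2\<bar>" unfolding eA eC dd cmod_sqdiff[OF uz ux] t2_def by simp
  have dc: "dist A B = 2 * r * \<bar>t3\<bar>" unfolding eA eB dd cmod_sqdiff[OF ux uy] t3_def by simp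
  obtain s :: real where s: "s = 1 \<or> s = -1" and st: "\<bar>t1\<bar> = s * t1" "\<bar>t2\<bar> = s * t2" "\<bar>t3\<bar> = s * t3"
  proof -
    have sg': "(t1 > 0 \<and> t2 > 0 \<and> t3 > 0) \<or> (t1 < 0 \<and> t2 < 0 \<and> t3 < 0)"
      using sg unfolding t1_def t2_def t3_def .
    have "\<exists>s::real. (s = 1 \<or> s = -1) \<and> \<bar>t1\<bar> = s * t1 \<and> \<bar>t2\<bar> = s * t2 \<and> \<bar>t3\<bar> = s * t3"
    proof (cases "t1 > 0")
      case True then have "t2 > 0" "t3 > 0" using sg' by auto
      then show ?thesis using True by (intro exI[of _ 1]) simp
    next
      case False then have "t1 < 0" "t2 < 0" "t3 < 0" using sg' by auto
      then show ?thesis by (intro exI[of _ "-1"]) simp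
    qed
    then show ?thesis using that by blast
  qed
  have tsum: "t1 + t2 + t3 \<noteq> 0" using sg unfolding t1_def t2_def t3_def by auto
  define k where "k = 2 * r * s"
  have k0: "k \<noteq> 0" using s r unfolding k_def by auto
  have "incenter A B C = (of_real (k * t1) * A + of_real (k * t2) * B + of_real (k * t3) * C)
        / of_real (k * (t1 + t2 + t3))"
    unfolding incenter_def da db dc st k_def by (simp add: scaleR_conv_of_real divide_inverse_commute algebra_simps)
  also have "\<dots> = c0 + of_real r * (-(x*y+y*z+z*x))"
  proof -
    have "of_real (k * t1) * A + of_real (k * t2) * B + of_real (k * t3) * C
       = of_real k * (of_real (t1 + t2 + t3) * c0 + of_real r *
           (of_real t1 * x^2 + of_real t2 * y^2 + of_real t3 * z^2))"
      unfolding eA eB eC by (simp add: algebra_simps)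
    also have "\<dots> = of_real (k * (t1 + t2 + t3)) * (c0 + of_real r * (-(x*y+y*z+z*x)))"
      unfolding key by (simp add: algebra_simps)
    finally have N: "of_real (k * t1) * A + of_real (k * t2) * B + of_real (k * t3) * C
       = of_real (k * (t1 + t2 + t3)) * (c0 + of_real r * (-(x*y+y*z+z*x)))" .
    have "complex_of_real (k * (t1 + t2 + t3)) \<noteq> 0" using k0 tsum by (simp only: of_real_eq_0_iff mult_eq_0_iff) simp
    then show ?thesis unfolding N by simp
  qed
  finally show ?thesis .
qed



lemma circ_exists:
  assumes ar: "area A B C \<noteq> 0"
  shows "\<exists>P. cmod (A - P) = cmod (B - P) \<and> cmod (A - P) = cmod (C - P)"
proof -
  define b where "b = B - A"
  define c where "c = C - A"
  define D where "D = cnj b * c - b * cnj c"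
  have "D = complex_of_real (2 * Im (cnj b * c)) * \<i>"
    unfolding D_def by (subst complex_diff_cnj[symmetric]) (simp add: mult.commute)
  moreover have "Im (cnj b * c) \<noteq> 0" using ar unfolding area_def b_def c_def .
  moreover have "\<And>t::real. t \<noteq> 0 \<Longrightarrow> complex_of_real (2*t) * \<i> \<noteq> 0" by simp
  ultimately have D0: "D \<noteq> 0" by metis
  have cD: "cnj D = - D" unfolding D_def by (simp add: mult.commute)
  have gen: "cmod w = cmod (w - v)"
    if h: "(v * cnj v * u - u * cnj u * v) * cnj v - cnj (v * cnj v * u - u * cnj u * v) * v
       = v * cnj v * (cnj v * u - v * cnj u)"
    and wd: "w = (v * cnj v * u - u * cnj u * v) / (cnj v * u - v * cnj u)"
    and d0: "cnj v * u - v * cnj u \<noteq> 0"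
    for w v u :: complex
  proof -
    define N where "N = v * cnj v * u - u * cnj u * v"
    define E where "E = cnj v * u - v * cnj u"
    have cE: "cnj E = - E" unfolding E_def by (simp add: mult.commute)
    have wNE: "w = N / E" unfolding wd N_def E_def ..
    have "cnj w = cnj N / cnj E" unfolding wNE by simp
    also have "\<dots> = cnj N / (- E)" by (simp only: cE)
    also have "\<dots> = - (cnj N / E)" by simp
    finally have cw: "cnj w = - (cnj N / E)" .
    have E0: "E \<noteq> 0" using d0 unfolding E_def .
    have "w * cnj v + cnj w * v = (N/E) * cnj v + (-(cnj N / E)) * v"
      by (subst cw, subst wNE, rule refl)
    also have "\<dots> = (N * cnj v - cnj N * v) / E"
      using E0 by (simp add: field_simps)
    also have "\<dots> = v * cnj v" using h d0 unfolding N_def[symmetric] E_def[symmetric] by simp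
    finally have s: "w * cnj v + cnj w * v = v * cnj v" .
    have "(w - v) * cnj (w - v) = w * cnj w - (w * cnj v + cnj w * v) + v * cnj v"
      by (simp add: algebra_simps)
    also have "\<dots> = w * cnj w" using s by simp
    finally have "complex_of_real ((cmod (w - v))^2) = complex_of_real ((cmod w)^2)"
      by (simp only: complex_norm_square)
    then have "(cmod (w - v))^2 = (cmod w)^2" by (simp only: of_real_eq_iff)
    then show ?thesis by (simp add: power2_eq_iff_nonneg)
  qed
  define N where "N = b * cnj b * c - c * cnj c * b"
  define w where "w = N / D"
  have w2: "w = (c * cnj c * b - b * cnj b * c) / (cnj c * b - c * cnj b)"
  proof -
    have "cnj c * b - c * cnj b = - D" unfolding D_def by (simp add: algebra_simps)
    moreover have "c * cnj c * b - b * cnj b * c = - N" unfolding N_def by (simp add: algebra_simps)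
    ultimately show ?thesis unfolding w_def by simp
  qed
  have g1: "cmod w = cmod (w - b)"
  proof (rule gen)
    show "(b * cnj b * c - c * cnj c * b) * cnj b - cnj (b * cnj b * c - c * cnj c * b) * b
       = b * cnj b * (cnj b * c - b * cnj c)" by simp algebra
    show "w = (b * cnj b * c - c * cnj c * b) / (cnj b * c - b * cnj c)"
      unfolding w_def N_def D_def ..
    show "cnj b * c - b * cnj c \<noteq> 0" using D0 unfolding D_def .
  qed
  have g2: "cmod w = cmod (w - c)"
  proof (rule gen)
    show "(c * cnj c * b - b * cnj b * c) * cnj c - cnj (c * cnj c * b - b * cnj b * c) * c
       = c * cnj c * (cnj c * b - c * cnj b)" by simp algebra
    show "w = (c * cnj c * b - b * cnj b * c) / (cnj c * b - c * cnj b)"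
      by (rule w2)
    have "cnj c * b - c * cnj b = - D" unfolding D_def by (simp add: algebra_simps)
    then show "cnj c * b - c * cnj b \<noteq> 0" using D0 by simp
  qed
  show ?thesis
  proof (intro exI[of _ "A + w"] conjI)
    show "cmod (A - (A + w)) = cmod (B - (A + w))"
      using g1 unfolding b_def by (simp add: norm_minus_commute algebra_simps)
    show "cmod (A - (A + w)) = cmod (C - (A + w))"
      using g2 unfolding c_def by (simp add: norm_minus_commute algebra_simps)
  qed
qed


theorem theorem5p2:
  fixes A B C I H H\<^sub>A H\<^sub>B H\<^sub>C Oa Ob Oc OA OB OC :: complex
  assumes tri: "\<not> collinear {A, B, C}"
      and "I = incenter A B C"
      and "H = orthocenter A B C"
      and "H\<^sub>A = orthocenter B I C"
      and "H\<^sub>B = orthocenter C I A"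
      and "H\<^sub>C = orthocenter A I B"
      and "Oa = circumcenter H\<^sub>A B C"
      and "Ob = circumcenter H\<^sub>B C A"
      and "Oc = circumcenter H\<^sub>C B A"
      and "OA = circumcenter A H\<^sub>B H\<^sub>C"
      and "OB = circumcenter B H\<^sub>C H\<^sub>A"
      and "OC = circumcenter C H\<^sub>A H\<^sub>B"
  shows "OA = point_reflection (midpoint H I) Oa
       \<and> OB = point_reflection (midpoint H I) Ob
       \<and> OC = point_reflection (midpoint H I) Oc"
proof -
  have ar: "area A B C \<noteq> 0" using tri area_collinear by blast
  obtain P where p1: "cmod (A - P) = cmod (B - P)" and p2: "cmod (A - P) = cmod (C - P)"
    using circ_exists[OF ar] by blast
  define R where "R = cmod (A - P)"
  have R0: "R > 0"
  proof (rule ccontr)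
    assume "\<not> R > 0" then have "R = 0" unfolding R_def by simp
    then have "A = P" "B = P" "C = P" using p1 p2 unfolding R_def by auto
    then have "area A B C = 0" by (simp add: area_def algebra_simps)
    with ar show False by simp
  qed
  have param: "\<exists>u. cmod u = 1 \<and> Q = P + of_real R * u^2" if "cmod (Q - P) = R" for Q
  proof -
    define u where "u = csqrt ((Q - P) / of_real R)"
    have u2: "u^2 = (Q - P) / of_real R" unfolding u_def by simp
    have "cmod (u^2) = 1" unfolding u2 using that R0 by (simp add: norm_divide)
    then have "(cmod u)^2 = 1" by (simp add: norm_power)
    then have "cmod u = 1 \<or> cmod u = -1" by (simp add: power2_eq_1_iff)
    then have "cmod u = 1" using norm_ge_zero[of u] by linarith
    moreover have "Q = P + of_real R * u^2" unfolding u2 using R0 by simp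
    ultimately show ?thesis by blast
  qed
  obtain x0 where ux0: "cmod x0 = 1" and ex0: "A = P + of_real R * x0^2"
    using param[of A] unfolding R_def by auto
  obtain y0 where uy0: "cmod y0 = 1" and ey0: "B = P + of_real R * y0^2"
    using param[of B] p1 unfolding R_def by auto
  obtain z0 where uz0: "cmod z0 = 1" and ez0: "C = P + of_real R * z0^2"
    using param[of C] p2 unfolding R_def by auto
  have t1: "Im (y0*cnj z0) \<noteq> 0"
  proof
    assume "Im (y0*cnj z0) = 0"
    then have "y0^2 = z0^2" by (rule unit_im[OF uy0 uz0])
    then have "B = C" using ey0 ez0 by simp
    then have "area A B C = 0" by (simp add: area_def algebra_simps)
    with ar show False by simp
  qed
  have t2: "Im (z0*cnj x0) \<noteq> 0"
  proof
    assume "Im (z0*cnj x0) = 0"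
    then have "z0^2 = x0^2" by (rule unit_im[OF uz0 ux0])
    then have "C = A" using ex0 ez0 by simp
    then have "area A B C = 0" by (simp add: area_def algebra_simps)
    with ar show False by simp
  qed
  have t3: "Im (x0*cnj y0) \<noteq> 0"
  proof
    assume "Im (x0*cnj y0) = 0"
    then have "x0^2 = y0^2" by (rule unit_im[OF ux0 uy0])
    then have "A = B" using ex0 ey0 by simp
    then have "area A B C = 0" by (simp add: area_def algebra_simps)
    with ar show False by simp
  qed
  obtain x y z where xs: "x = x0 \<or> x = -x0" and ys: "y = y0 \<or> y = -y0" and zs: "z = z0 \<or> z = -z0"
    and sg: "(Im (y*cnj z) > 0 \<and> Im (z*cnj x) > 0 \<and> Im (x*cnj y) > 0) \<or>
      (Im (y*cnj z) < 0 \<and> Im (z*cnj x) < 0 \<and> Im (x*cnj y) < 0)"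
    using sign_choice[OF t1 t2 t3] by blast
  have ux: "cmod x = 1" using xs ux0 by auto
  have uy: "cmod y = 1" using ys uy0 by auto
  have uz: "cmod z = 1" using zs uz0 by auto
  have eA: "A = P + of_real R * x^2" using xs ex0 by auto
  have eB: "B = P + of_real R * y^2" using ys ey0 by auto
  have eC: "C = P + of_real R * z^2" using zs ez0 by auto
  have Rn: "R \<noteq> 0" using R0 by simp
  have x0': "x \<noteq> 0" using ux by auto
  have y0': "y \<noteq> 0" using uy by auto
  have z0': "z \<noteq> 0" using uz by auto
  have cx: "cnj x = inverse x" using ux by (rule unit_cnj)
  have cy: "cnj y = inverse y" using uy by (rule unit_cnj)
  have cz: "cnj z = inverse z" using uz by (rule unit_cnj)
  have eI: "I = P + of_real R * (-(x*y+y*z+z*x))"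
    using assms(2) incenter_param[OF ux uy uz R0 sg eA eB eC] by simp
  have eH: "H = P + of_real R * (x^2+y^2+z^2)"
  proof -
    have "orthocenter (P + of_real R * x^2) (P + of_real R * y^2) (P + of_real R * z^2)
       = P + of_real R * (x^2+y^2+z^2)"
    proof (rule orth_tr[OF Rn])
      show "area (x^2) (y^2) (z^2) \<noteq> 0" using ar unfolding eA eB eC area_scale using Rn by simp
      show "Re ((x^2+y^2+z^2 - x^2) * cnj (y^2 - z^2)) = 0"
        by (rule re0) (simp add: cx cy cz, (simp add: field_simps x0' y0' z0')?, (algebra)?)
      show "Re ((x^2+y^2+z^2 - y^2) * cnj (z^2 - x^2)) = 0"
        by (rule re0) (simp add: cx cy cz, (simp add: field_simps x0' y0' z0')?, (algebra)?)
      show "Re ((x^2+y^2+z^2 - z^2) * cnj (x^2 - y^2)) = 0"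
        by (rule re0) (simp add: cx cy cz, (simp add: field_simps x0' y0' z0')?, (algebra)?)
    qed
    then show ?thesis using assms(3) eA eB eC by simp
  qed
  have sg2: "(Im (z*cnj x) > 0 \<and> Im (x*cnj y) > 0 \<and> Im (y*cnj z) > 0) \<or>
      (Im (z*cnj x) < 0 \<and> Im (x*cnj y) < 0 \<and> Im (y*cnj z) < 0)" using sg by auto
  have sg3: "(Im (x*cnj y) > 0 \<and> Im (y*cnj z) > 0 \<and> Im (z*cnj x) > 0) \<or>
      (Im (x*cnj y) < 0 \<and> Im (y*cnj z) < 0 \<and> Im (z*cnj x) < 0)" using sg by auto
  have eI2: "I = P + of_real R * (-(y*z+z*x+x*y))" using eI by (simp add: algebra_simps)
  have eI3: "I = P + of_real R * (-(z*x+x*y+y*z))" using eI by (simp add: algebra_simps)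
  note V1 = vertex[OF ux uy uz Rn sg eA eB eC eI refl refl refl]
  note V2 = vertex[OF uy uz ux Rn sg2 eB eC eA eI2 refl refl refl]
  note V3 = vertex[OF uz ux uy Rn sg3 eC eA eB eI3 refl refl refl]
  have hA: "H\<^sub>A = P + of_real R * (y^2+z^2+y*z-x*y-x*z)" using assms(4) V1 by simp
  have hB: "H\<^sub>B = P + of_real R * (z^2+x^2+z*x-y*z-y*x)" using assms(5) V2 by simp
  have hC: "H\<^sub>C = P + of_real R * (x^2+y^2+x*y-z*x-z*y)" using assms(6) V3 by simp
  have oa: "Oa = P + of_real R * (y^2+z^2+y*z)" using assms(7) V1 hA by simp
  have ob: "Ob = P + of_real R * (z^2+x^2+z*x)" using assms(8) V2 hB by simp
  have oc: "Oc = P + of_real R * (x^2+y^2+x*y)" using assms(9) V3 hC by simp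
  have oA: "OA = P + of_real R * (x^2-x*y-x*z-2*y*z)" using assms(10) V1 hB hC by simp
  have oB: "OB = P + of_real R * (y^2-y*z-y*x-2*z*x)" using assms(11) V2 hC hA by simp
  have oC: "OC = P + of_real R * (z^2-z*x-z*y-2*x*y)" using assms(12) V3 hA hB by simp
  show ?thesis
    unfolding oa ob oc oA oB oC eH eI point_reflection_def midpoint_def scaleR_conv_of_real
    by (simp add: algebra_simps power2_eq_square)
qed

end
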